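(* For every integer $b\geq 2$ there exist graphs $G$ and $H$ such that $\rho(G\square H)-\rho(G)\rho(H)=b$.
   Context: All graphs are finite and simple. A set $P\subseteq V(G)$ is a packing of $G$ if $N[u]\cap N[v]=\emptyset$ for all distinct $u,v\in P$, where $N[u]$ is the closed neighborhood of $u$; the packing number $\rho(G)$ is the maximum cardinality of a packing of $G$. The Cartesian product $G\square H$ has vertex set $V(G)\times V(H)$, with $(g,h)$ adjacent to $(g',h')$ iff ($gg'\in E(G)$ and $h=h'$) or ($g=g'$ and $hh'\in E(H)$). *)

theory Defs
  imports Main
begin

type_synonym 'a graph = "'a set \<times> 'a set set"

definition verts :: "'a graph \<Rightarrow> 'a set" where "verts G = fst G"
definition edges :: "'a graph \<Rightarrow> 'a set set" where "edges G = snd G"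

definition finite_simple_graph :: "'a graph \<Rightarrow> bool" where
  "finite_simple_graph G \<longleftrightarrow> finite (verts G) \<and> verts G \<noteq> {} \<and>
     (\<forall>e\<in>edges G. \<exists>u v. u \<noteq> v \<and> u \<in> verts G \<and> v \<in> verts G \<and> e = {u, v})"

definition adj :: "'a graph \<Rightarrow> 'a \<Rightarrow> 'a \<Rightarrow> bool" where
  "adj G u v \<longleftrightarrow> {u, v} \<in> edges G"

definition closed_nbhd :: "'a graph \<Rightarrow> 'a \<Rightarrow> 'a set" where
  "closed_nbhd G u = {v \<in> verts G. v = u \<or> adj G u v}"

definition is_packing :: "'a graph \<Rightarrow> 'a set \<Rightarrow> bool" where
  "is_packing G P \<longleftrightarrow> P \<subseteq> verts G \<and>
     (\<forall>u\<in>P. \<forall>v\<in>P. u \<noteq> v \<longrightarrow> closed_nbhd G u \<inter> closed_nbhd G v = {})"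

definition packing_number :: "'a graph \<Rightarrow> nat" where
  "packing_number G = Max (card ` {P. is_packing G P})"

definition cart_prod :: "'a graph \<Rightarrow> 'b graph \<Rightarrow> ('a \<times> 'b) graph" where
  "cart_prod G H = (verts G \<times> verts H,
     {{(g, h), (g', h')} | g h g' h'. g \<in> verts G \<and> g' \<in> verts G \<and> h \<in> verts H \<and> h' \<in> verts H \<and>
        ((adj G g g' \<and> h = h') \<or> (g = g' \<and> adj H h h'))})"

end

theory Submission
  imports Defs
begin

definition S :: "nat \<Rightarrow> nat graph" where
  "S n = ({0..n}, {{0, i} | i. i \<in> {1..n}})"

lemma vS[simp]: "verts (S n) = {0..n}" by (simp add: S_def verts_def)

lemma adjS: "adj (S n) a c \<longleftrightarrow> (a = 0 \<and> c \<in> {1..n}) \<or> (c = 0 \<and> a \<in> {1..n})"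
  unfolding adj_def S_def edges_def by (auto simp: doubleton_eq_iff)

lemma fsgS: "finite_simple_graph (S n)"
  unfolding finite_simple_graph_def apply (auto simp: S_def edges_def verts_def)
  subgoal for i by (rule exI[of _ 0], rule exI[of _ i]) auto
  done

lemma vT[simp]: "verts (cart_prod G H) = verts G \<times> verts H"
  by (simp add: cart_prod_def verts_def)

lemma adjT: "adj (cart_prod (S n) (S n)) (a,b) (c,d) \<longleftrightarrow>
   (a \<le> n \<and> b \<le> n \<and> c \<le> n \<and> d \<le> n \<and> ((adj (S n) a c \<and> b = d) \<or> (a = c \<and> adj (S n) b d)))"
proof
  assume "adj (cart_prod (S n) (S n)) (a,b) (c,d)"
  then show "a \<le> n \<and> b \<le> n \<and> c \<le> n \<and> d \<le> n \<and> ((adj (S n) a c \<and> b = d) \<or> (a = c \<and> adj (S n) b d))"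
    unfolding adjS unfolding adj_def cart_prod_def edges_def verts_def S_def
    by (auto simp: doubleton_eq_iff)
next
  assume h: "a \<le> n \<and> b \<le> n \<and> c \<le> n \<and> d \<le> n \<and> ((adj (S n) a c \<and> b = d) \<or> (a = c \<and> adj (S n) b d))"
  have "{(a,b),(c,d)} \<in> edges (cart_prod (S n) (S n))"
    unfolding cart_prod_def edges_def
    apply simp
    apply (rule exI[of _ a], rule exI[of _ b], rule exI[of _ c], rule exI[of _ d])
    using h by (simp add: adj_def)
  then show "adj (cart_prod (S n) (S n)) (a,b) (c,d)" by (simp add: adj_def)
qed

lemma NT: "(x,y) \<in> closed_nbhd (cart_prod (S n) (S n)) (a,b) \<longleftrightarrow>
   x \<le> n \<and> y \<le> n \<and> ((x = a \<and> y = b) \<or> (a \<le> n \<and> b \<le> n \<and>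
     ((((a = 0 \<and> x \<ge> 1) \<or> (x = 0 \<and> a \<ge> 1)) \<and> b = y) \<or> (a = x \<and> ((b = 0 \<and> y \<ge> 1) \<or> (y = 0 \<and> b \<ge> 1))))))"
  unfolding closed_nbhd_def by (auto simp: adjT adjS)

lemma pk: "is_packing G P \<Longrightarrow> u \<in> P \<Longrightarrow> v \<in> P \<Longrightarrow> w \<in> closed_nbhd G u \<Longrightarrow> w \<in> closed_nbhd G v \<Longrightarrow> u = v"
  unfolding is_packing_def by blast

lemma pn_eq:
  assumes "finite (verts G)" "is_packing G P" "card P = k" "\<And>Q. is_packing G Q \<Longrightarrow> card Q \<le> k"
  shows "packing_number G = k"
proof -
  have "finite {P. is_packing G P}"
    by (rule finite_subset[of _ "Pow (verts G)"]) (use assms(1) in \<open>auto simp: is_packing_def\<close>)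
  then show ?thesis unfolding packing_number_def
    using assms by (intro Max_eqI) auto
qed

lemma rhoS: "n \<ge> 1 \<Longrightarrow> packing_number (S n) = 1"
proof (rule pn_eq[where P="{0}"])
  show "is_packing (S n) {0}" by (simp add: is_packing_def)
  fix Q assume q: "is_packing (S n) Q"
  have Qs: "Q \<subseteq> {0..n}" using q by (simp add: is_packing_def)
  have "\<forall>a\<in>Q. \<forall>b\<in>Q. a = b"
  proof (intro ballI)
    fix a b assume ab: "a \<in> Q" "b \<in> Q"
    have "\<And>u. u \<in> Q \<Longrightarrow> 0 \<in> closed_nbhd (S n) u"
      using Qs by (auto simp: closed_nbhd_def adjS)
    then show "a = b" using pk[OF q ab] ab by blast
  qed
  moreover have "finite Q" using Qs finite_subset by blast
  ultimately show "card Q \<le> 1" using card_le_Suc0_iff_eq by auto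
qed auto

abbreviation T where "T n \<equiv> cart_prod (S n) (S n)"

lemma lowT: "is_packing (T n) ((\<lambda>i. (i,i)) ` {1..n})"
  unfolding is_packing_def
proof (intro conjI ballI impI)
  show "(\<lambda>i. (i, i)) ` {1..n} \<subseteq> verts (T n)" by auto
  fix u v assume uv: "u \<in> (\<lambda>i. (i, i)) ` {1..n}" "v \<in> (\<lambda>i. (i, i)) ` {1..n}" "u \<noteq> v"
  show "closed_nbhd (T n) u \<inter> closed_nbhd (T n) v = {}"
  proof (rule ccontr)
    assume "closed_nbhd (T n) u \<inter> closed_nbhd (T n) v \<noteq> {}"
    then obtain x y where "(x,y) \<in> closed_nbhd (T n) u" "(x,y) \<in> closed_nbhd (T n) v" by auto
    with uv show False by (auto simp: NT)
  qed
qed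

lemma upT:
  assumes q: "is_packing (T n) P" and n: "n \<ge> 1"
  shows "card P \<le> n"
proof -
  have Ps: "P \<subseteq> {0..n} \<times> {0..n}" using q by (simp add: is_packing_def)
  have fP: "finite P" using Ps finite_subset by blast
  note pk' = pk[OF q]
  define Q where "Q = P \<inter> ({1..n} \<times> {1..n})"
  define R where "R = P - Q"
  have fQ: "finite Q" using fP Q_def by simp
  have injf: "inj_on fst Q"
  proof (rule inj_onI)
    fix u v assume uv: "u \<in> Q" "v \<in> Q" "fst u = fst v"
    then obtain i j j' where "u = (i,j)" "v = (i,j')" "i \<in> {1..n}" by (auto simp: Q_def)
    moreover have "(i,0) \<in> closed_nbhd (T n) u" "(i,0) \<in> closed_nbhd (T n) v"
      using uv calculation by (auto simp: NT Q_def)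
    ultimately show "u = v" using pk' uv by (auto simp: Q_def)
  qed
  have injs: "inj_on snd Q"
  proof (rule inj_onI)
    fix u v assume uv: "u \<in> Q" "v \<in> Q" "snd u = snd v"
    then obtain i i' j where "u = (i,j)" "v = (i',j)" "j \<in> {1..n}" by (auto simp: Q_def)
    moreover have "(0,j) \<in> closed_nbhd (T n) u" "(0,j) \<in> closed_nbhd (T n) v"
      using uv calculation by (auto simp: NT Q_def)
    ultimately show "u = v" using pk' uv by (auto simp: Q_def)
  qed
  have cQ: "card Q \<le> n"
  proof -
    have "card Q = card (fst ` Q)" using injf card_image by metis
    also have "\<dots> \<le> card {1..n}" by (rule card_mono) (auto simp: Q_def)
    finally show ?thesis by simp
  qed
  show ?thesis
  proof (cases "R = {}")
    case True
    then have "P = Q" using R_def Q_def by auto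
    then show ?thesis using cQ by simp
  next
    case False
    then obtain r where r: "r \<in> R" by auto
    have rP: "r \<in> P" using r R_def by auto
    have R1: "R = {r}"
    proof -
      have "(0,0) \<in> closed_nbhd (T n) u" if u: "u \<in> R" for u
      proof -
        obtain x y where xy: "u = (x,y)" by force
        have "(x,y) \<in> P" "(x,y) \<notin> Q" using u xy R_def by auto
        then have "x \<le> n" "y \<le> n" "x = 0 \<or> y = 0" using Ps Q_def by auto
        then have "(0,0) \<in> closed_nbhd (T n) (x,y)" unfolding NT by auto
        then show ?thesis using xy by simp
      qed
      note h0 = this
      have ur: "u = r" if u: "u \<in> R" for u
      proof -
        have "u \<in> P" using u R_def by simp
        then show ?thesis using pk'[OF _ rP h0[OF u] h0[OF r]] by simp
      qed
      show ?thesis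
      proof
        show "R \<subseteq> {r}" using ur by blast
        show "{r} \<subseteq> R" using r by simp
      qed
    qed
    have QP: "Q \<subseteq> P" by (simp add: Q_def)
    have rQ: "r \<notin> Q" using r by (simp add: R_def)
    have "P = Q \<union> (P - Q)" using QP by blast
    also have "\<dots> = insert r Q" using R1 by (simp add: R_def)
    finally have PQ: "P = insert r Q" "r \<notin> Q" using rQ by simp_all
    have cP: "card P = Suc (card Q)" using PQ fQ by simp
    obtain a b where rab: "r = (a,b)" by force
    have ab: "a \<le> n" "b \<le> n" "a = 0 \<or> b = 0" using rP Ps PQ(2) rab Q_def by auto
    show ?thesis
    proof (cases "a = 0 \<and> b = 0")
      case True
      have "Q = {}"
      proof (rule ccontr)
        assume "Q \<noteq> {}"
        then obtain i j where ij: "(i,j) \<in> Q" by auto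
        then have "(0,j) \<in> closed_nbhd (T n) (i,j)" "(0,j) \<in> closed_nbhd (T n) r"
          using True rab by (auto simp: NT Q_def)
        moreover have "(i,j) \<in> P" using ij Q_def by simp
        ultimately have "(i,j) = r" using pk'[OF _ rP] by blast
        then show False using ij PQ by simp
      qed
      then show ?thesis using cP n by simp
    next
      case False
      show ?thesis
      proof (cases "a = 0")
        case a0: True
        with False ab have b1: "b \<in> {1..n}" by auto
        have "snd ` Q \<subseteq> {1..n} - {b}"
        proof
          fix y assume "y \<in> snd ` Q"
          then obtain i where iy: "(i,y) \<in> Q" by auto
          have "y \<noteq> b"
          proof
            assume "y = b"
            then have "(i,y) \<in> closed_nbhd (T n) (i,y)" "(i,y) \<in> closed_nbhd (T n) r"
              using iy a0 rab b1 by (auto simp: NT Q_def)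
            moreover have "(i,y) \<in> P" using iy Q_def by simp
        ultimately have "(i,y) = r" using pk'[OF _ rP] by blast
            then show False using iy PQ by simp
          qed
          then show "y \<in> {1..n} - {b}" using iy Q_def by auto
        qed
        then have "card (snd ` Q) \<le> card ({1..n} - {b})" by (intro card_mono) auto
        moreover have "card (snd ` Q) = card Q" using injs card_image by metis
        moreover have "card ({1..n} - {b}) = n - 1" using b1 by simp
        ultimately have "card Q \<le> n - 1" by linarith
        then show ?thesis using cP n by linarith
      next
        case a1: False
        with ab have b0: "b = 0" and a1': "a \<in> {1..n}" by auto
        have "fst ` Q \<subseteq> {1..n} - {a}"
        proof
          fix x assume "x \<in> fst ` Q"
          then obtain j where xj: "(x,j) \<in> Q" by auto
          have "x \<noteq> a"
          proof
            assume "x = a"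
            then have "(x,j) \<in> closed_nbhd (T n) (x,j)" "(x,j) \<in> closed_nbhd (T n) r"
              using xj b0 rab a1' by (auto simp: NT Q_def)
            moreover have "(x,j) \<in> P" using xj Q_def by simp
        ultimately have "(x,j) = r" using pk'[OF _ rP] by blast
            then show False using xj PQ by simp
          qed
          then show "x \<in> {1..n} - {a}" using xj Q_def by auto
        qed
        then have "card (fst ` Q) \<le> card ({1..n} - {a})" by (intro card_mono) auto
        moreover have "card (fst ` Q) = card Q" using injf card_image by metis
        moreover have "card ({1..n} - {a}) = n - 1" using a1' by simp
        ultimately have "card Q \<le> n - 1" by linarith
        then show ?thesis using cP n by linarith
      qed
    qed
  qed
qed

lemma rhoT: "n \<ge> 1 \<Longrightarrow> packing_number (T n) = n"
  apply (rule pn_eq[OF _ lowT])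
  apply simp
  apply (subst card_image) apply (auto intro: inj_onI upT)
  done

theorem mainTheorem1:
  fixes b :: int
  assumes "b \<ge> 2"
  shows "\<exists>(G :: nat graph) (H :: nat graph).
           finite_simple_graph G \<and> finite_simple_graph H \<and>
           int (packing_number (cart_prod G H)) - int (packing_number G) * int (packing_number H) = b"
proof (intro exI conjI)
  let ?n = "nat b + 1"
  show "finite_simple_graph (S ?n)" by (rule fsgS)
  show "finite_simple_graph (S ?n)" by (rule fsgS)
  show "int (packing_number (T ?n)) - int (packing_number (S ?n)) * int (packing_number (S ?n)) = b"
    using assms by (simp add: rhoT rhoS)
qed

end
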